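(* Let $N\ge1$ and $b\ge1$ be integers, let $\Delta\ge 1$ and $K\ge 1$ be reals, and suppose $b\le\log_2(N/(K\Delta))$. Then there is a set $\mathcal{Y}\subset(\{0,1\}^b)^N$ of entropy deficiency at most $\Delta$ and min-entropy rate more than $1-1/b$ such that for every $I\subseteq[N]$ with $|I|\le (K-1)\Delta$, the set $\mathrm{IP}_b^{[N]\setminus I}((\{0,1\}^b)^N,\mathcal{Y})$ does not contain the all-$1$ string.
   Context: The Inner-Product function $\mathrm{IP}_b:\{0,1\}^b\times\{0,1\}^b\to\{0,1\}$ is $\mathrm{IP}_b(x,y)=\sum_j x_jy_j \bmod 2$. For $\mathcal{A},\mathcal{B}\subseteq(\{0,1\}^b)^N$ and $J\subseteq[N]$, $\mathrm{IP}_b^J(\mathcal{A},\mathcal{B})\subseteq\{0,1\}^J$ is the set of vectors $(\mathrm{IP}_b(x_i,y_i))_{i\in J}$ with $x\in\mathcal{A}$, $y\in\mathcal{B}$. A set is identified with the uniform distribution on it. The entropy deficiency of a set $\mathcal{Y}\subseteq(\{0,1\}^b)^N$ is $bN-\log_2|\mathcal{Y}|$. The min-entropy rate of a distribution $\mathcal{D}$ on $U^N$ is the largest $\tau$ such that for every $J\subseteq[N]$ and $\alpha_J\in U^J$, $\Pr_{x\sim\mathcal{D}}[x_J=\alpha_J]\le|U|^{-\tau|J|}$ (here $|U|=2^b$). *)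

theory Defs
  imports Complex_Main "HOL-Library.FuncSet"
begin

text \<open>Elements of \<open>{0,1}^b\<close> are boolean lists of length b; elements of
  \<open>({0,1}^b)^N\<close> are lists of N such blocks; coordinates are indexed by \<open>{..<N}\<close>.\<close>

definition blocks :: "nat \<Rightarrow> nat \<Rightarrow> bool list list set" where
  "blocks b N = {xs. length xs = N \<and> (\<forall>v\<in>set xs. length v = b)}"

definition IP :: "nat \<Rightarrow> bool list \<Rightarrow> bool list \<Rightarrow> nat" where
  "IP b x y = (\<Sum>j<b. (if x ! j \<and> y ! j then 1 else 0)) mod 2"

text \<open>\<open>IP_b^J(A,B)\<close>: vectors indexed by J (extended by undefined outside J).\<close>
definition IP_set :: "nat \<Rightarrow> nat set \<Rightarrow> bool list list set \<Rightarrow> bool list list set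
    \<Rightarrow> (nat \<Rightarrow> nat) set" where
  "IP_set b J A B = {restrict (\<lambda>i. IP b (x ! i) (y ! i)) J | x y. x \<in> A \<and> y \<in> B}"

definition entropy_deficiency :: "nat \<Rightarrow> nat \<Rightarrow> bool list list set \<Rightarrow> real" where
  "entropy_deficiency b N Y = real b * real N - log 2 (real (card Y))"

definition prob_agree :: "bool list list set \<Rightarrow> nat set \<Rightarrow> (nat \<Rightarrow> bool list) \<Rightarrow> real" where
  "prob_agree Y J \<alpha> = real (card {x \<in> Y. \<forall>i\<in>J. x ! i = \<alpha> i}) / real (card Y)"

definition min_entropy_rate :: "nat \<Rightarrow> nat \<Rightarrow> bool list list set \<Rightarrow> real" where
  "min_entropy_rate b N Y = Sup {\<tau>. \<forall>J \<subseteq> {..<N}. \<forall>\<alpha> :: nat \<Rightarrow> bool list.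
      prob_agree Y J \<alpha> \<le> (2 ^ b) powr (- \<tau> * real (card J))}"

end

theory Submission imports Defs begin

lemma key_step:
  fixes a :: "nat \<Rightarrow> real" and c :: real and n m :: nat
  assumes c: "c \<ge> 1" and pos: "\<And>j. j \<le> n \<Longrightarrow> a j > 0"
    and rec: "\<And>j. j < n \<Longrightarrow> a (Suc j) * real (Suc j) * c = a j * real (n - j)"
    and nm: "(c + 1) * real m \<le> real n"
  shows "k < m \<Longrightarrow> a (m - 1 - k) < a (m + k)"
proof (induction k)
  case 0
  have m1: "m \<ge> 1" using 0 by simp
  have "2 * real m \<le> (c + 1) * real m" by (rule mult_right_mono) (use c in auto)
  then have "2 * real m \<le> real n" using nm by linarith
  then have mn: "2 * m \<le> n" by linarith
  have lt: "real m * c < real (n - (m - 1))" using nm m1 mn by (simp add: of_nat_diff algebra_simps)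
  have "m - 1 < n" using mn m1 by linarith
  then have r: "a m * (real m * c) = a (m - 1) * real (n - (m - 1))" using rec[of "m-1"] m1
    by (simp add: mult.assoc)
  have "a (m-1) > 0" "a m > 0" using pos \<open>m - 1 < n\<close> mn by auto
  then have "a m * (real m * c) < a m * real (n - (m - 1))" using lt by simp
  then have "a (m - 1) * real (n - (m - 1)) < a m * real (n - (m - 1))" using r by linarith
  then show ?case by (simp add: mult_less_cancel_right)
next
  case (Suc k)
  define j1 where "j1 = m - 2 - k"
  define j2 where "j2 = m + k"
  have "m - 1 - k = Suc j1" unfolding j1_def using Suc.prems by simp
  then have IH: "a (Suc j1) < a j2" using Suc unfolding j2_def by simp
  have e1: "m - 1 - Suc k = j1" "m + Suc k = Suc j2" unfolding j1_def j2_def by auto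
  have "2 * real m \<le> (c + 1) * real m" by (rule mult_right_mono) (use c in auto)
  then have "2 * real m \<le> real n" using nm by linarith
  then have mn: "2 * m \<le> n" by linarith
  have j2n: "j2 < n" using mn Suc.prems unfolding j2_def by linarith
  have j1n: "j1 < n" using j2n unfolding j1_def j2_def by simp
  have r1: "a (Suc j1) * real (Suc j1) * c = a j1 * real (n - j1)" using rec j1n by simp
  have r2: "a (Suc j2) * real (Suc j2) * c = a j2 * real (n - j2)" using rec j2n by simp
  define i where "i = Suc k"
  have ii: "Suc j1 = m - i" "Suc j2 = m + i" "n - j1 = n - m + 1 + i" "n - j2 = n - m + 1 - i"
    using Suc.prems j2n unfolding i_def j1_def j2_def by auto
  have ineq: "real (Suc j1) * real (Suc j2) * c * c \<le> real (n - j1) * real (n - j2)"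
  proof -
    have im: "i \<le> m" "m \<le> n" using Suc.prems mn unfolding i_def by auto
    have A: "real (m - i) * real (m + i) = real m ^ 2 - real i ^ 2"
      using im by (simp add: of_nat_diff power2_eq_square algebra_simps)
    have B: "real (n - m + 1 + i) * real (n - m + 1 - i) = (real n - real m + 1) ^ 2 - real i ^ 2"
      using im ii j2n by (simp add: of_nat_diff power2_eq_square algebra_simps)
    have C: "c * real m \<le> real n - real m" using nm by (simp add: algebra_simps)
    have D: "(c * real m) ^ 2 \<le> (real n - real m + 1) ^ 2"
      using C c by (intro power_mono) auto
    have E: "c^2 * real i ^ 2 \<ge> real i ^ 2" using c
      by (simp add: mult_le_cancel_right1 one_le_power)
    have "real (Suc j1) * real (Suc j2) * c * c = c^2 * real m ^ 2 - c^2 * real i ^ 2"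
      unfolding ii A by (simp add: power2_eq_square algebra_simps)
    also have "\<dots> \<le> (real n - real m + 1) ^ 2 - real i ^ 2" using D E by (simp add: power_mult_distrib)
    also have "\<dots> = real (n - j1) * real (n - j2)" unfolding ii B ..
    finally show ?thesis .
  qed
  have p: "a j1 > 0" "a (Suc j1) > 0" "a j2 > 0" "a (Suc j2) > 0" using pos j1n j2n by auto
  have pn: "real (n - j2) > 0" "real (Suc j1) > 0" "real (n - j1) > 0" using j2n j1n by auto
  have "a j1 * real (n - j1) * real (n - j2) = (a (Suc j1) * real (Suc j1) * c) * real (n - j2)"
    by (simp only: r1)
  also have "\<dots> = a (Suc j1) * (real (Suc j1) * c * real (n - j2))" by (simp only: mult_ac)
  also have "\<dots> < a j2 * (real (Suc j1) * c * real (n - j2))"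
    using IH pn c by (intro mult_strict_right_mono) auto
  also have "\<dots> = (a j2 * real (n - j2)) * (real (Suc j1) * c)" by (simp only: mult_ac)
  also have "\<dots> = (a (Suc j2) * real (Suc j2) * c) * (real (Suc j1) * c)" by (simp only: r2)
  also have "\<dots> = a (Suc j2) * (real (Suc j1) * real (Suc j2) * c * c)" by (simp only: mult_ac)
  also have "\<dots> \<le> a (Suc j2) * (real (n - j1) * real (n - j2))"
    using ineq p by (intro mult_left_mono) auto
  finally have "a j1 * (real (n - j1) * real (n - j2)) < a (Suc j2) * (real (n - j1) * real (n - j2))"
    by (simp only: mult_ac)
  then have "a j1 < a (Suc j2)" using pn by (simp add: mult_less_cancel_right)
  then show ?case unfolding e1 .
qed

lemma median_sum:
  fixes a :: "nat \<Rightarrow> real" and c :: real and n m :: nat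
  assumes c: "c \<ge> 1" and pos: "\<And>j. j \<le> n \<Longrightarrow> a j > 0"
    and rec: "\<And>j. j < n \<Longrightarrow> a (Suc j) * real (Suc j) * c = a j * real (n - j)"
    and nm: "(c + 1) * real m \<le> real n"
  shows "sum a {..n} < 2 * sum a {m..n}"
proof -
  have "2 * real m \<le> (c + 1) * real m" by (rule mult_right_mono) (use c in auto)
  then have "2 * real m \<le> real n" using nm by linarith
  then have mn: "2 * m \<le> n" by linarith
  have split: "sum a {..n} = sum a {..<m} + sum a {m..n}"
  proof -
    have "{..n} = {..<m} \<union> {m..n}" using mn by auto
    then show ?thesis by (simp add: sum.union_disjoint ivl_disj_int)
  qed
  have lt: "sum a {..<m} < sum a {m..n}"
  proof (cases "m = 0")
    case True
    have "0 < sum a {m..n}" using pos mn by (intro sum_pos) auto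
    then show ?thesis using True by simp
  next
    case False
    have "sum a {..<m} = (\<Sum>k<m. a (m - 1 - k))"
      using sum.nat_diff_reindex[of a m] by simp
    also have "\<dots> < (\<Sum>k<m. a (m + k))"
      using False key_step[OF c pos rec nm] by (intro sum_strict_mono) auto
    also have "\<dots> = sum a ((+) m ` {..<m})" by (simp add: sum.reindex)
    also have "\<dots> \<le> sum a {m..n}"
      using mn pos by (intro sum_mono2) (auto simp: less_imp_le)
    finally show ?thesis .
  qed
  show ?thesis using split lt by linarith
qed

definition zb :: "nat \<Rightarrow> bool list" where "zb b = replicate b False"
definition nz :: "nat \<Rightarrow> bool list list \<Rightarrow> nat" where "nz b y = length (filter (\<lambda>v. v = zb b) y)"
definition BB :: "nat \<Rightarrow> nat \<Rightarrow> nat \<Rightarrow> bool list list set" where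
  "BB b N j = {y \<in> blocks b N. nz b y = j}"

lemma card_V: "card {v::bool list. length v = b} = 2 ^ b"
  using card_lists_length_eq[of "UNIV :: bool set" b] by simp

lemma finite_V: "finite {v::bool list. length v = b}"
  using finite_lists_length_eq[of "UNIV :: bool set" b] by simp

lemma blocks_alt: "blocks b N = {xs. set xs \<subseteq> {v. length v = b} \<and> length xs = N}"
  unfolding blocks_def by auto

lemma finite_blocks: "finite (blocks b N)"
  unfolding blocks_alt by (rule finite_lists_length_eq[OF finite_V])

lemma card_blocks: "card (blocks b N) = (2 ^ b) ^ N"
  unfolding blocks_alt by (subst card_lists_length_eq[OF finite_V]) (simp add: card_V)

lemma blocks_0: "blocks b 0 = {[]}"
  unfolding blocks_def by auto

lemma blocks_Suc: "blocks b (Suc N) = (\<lambda>(v,ys). v # ys) ` ({v. length v = b} \<times> blocks b N)"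
  unfolding blocks_def by (auto simp: length_Suc_conv image_iff)

lemma zb_V: "zb b \<in> {v. length v = b}" unfolding zb_def by simp

lemma card_BB: "card (BB b N j) = (N choose j) * (2 ^ b - 1) ^ (N - j)"
proof (induction N arbitrary: j)
  case 0
  have "BB b 0 j = (if j = 0 then {[]} else {})" unfolding BB_def blocks_0 nz_def by auto
  then show ?case by simp
next
  case (Suc N)
  define V where "V = {v::bool list. length v = b}"
  define S where "S = {p \<in> V \<times> blocks b N. nz b (fst p # snd p) = j}"
  have inj: "inj_on (\<lambda>(v,ys). v # ys) S" by (auto simp: inj_on_def)
  have img: "BB b (Suc N) j = (\<lambda>(v,ys). v # ys) ` S"
    unfolding BB_def S_def V_def blocks_Suc by (auto simp: image_iff)
  have cV: "card (V - {zb b}) = 2 ^ b - 1" unfolding V_def using zb_V card_V finite_V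
    by (simp add: card_Diff_singleton)
  have fin: "finite V" "finite (BB b N i)" for i
    unfolding V_def BB_def using finite_V finite_blocks by auto
  show ?case
  proof (cases j)
    case 0
    have "S = (V - {zb b}) \<times> BB b N 0" unfolding S_def BB_def 0 by (auto simp: nz_def)
    then have "card (BB b (Suc N) j) = (2 ^ b - 1) * card (BB b N 0)"
      using img inj cV by (simp add: card_image card_cartesian_product)
    then show ?thesis using Suc.IH[of 0] 0 by simp
  next
    case (Suc i)
    have "S = ({zb b} \<times> BB b N i) \<union> ((V - {zb b}) \<times> BB b N (Suc i))"
      unfolding S_def BB_def Suc using zb_V unfolding V_def by (auto simp: nz_def)
    moreover have "card ({zb b} \<times> BB b N i \<union> (V - {zb b}) \<times> BB b N (Suc i))
        = card ({zb b} \<times> BB b N i) + card ((V - {zb b}) \<times> BB b N (Suc i))"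
      using fin by (intro card_Un_disjoint) auto
    ultimately have "card S = card (BB b N i) + (2 ^ b - 1) * card (BB b N (Suc i))"
      using cV by (simp add: card_cartesian_product)
    then have "card (BB b (Suc N) j) = card (BB b N i) + (2 ^ b - 1) * card (BB b N (Suc i))"
      using img inj by (simp add: card_image)
    also have "\<dots> = (N choose i) * (2 ^ b - 1) ^ (N - i)
        + (2 ^ b - 1) * ((N choose Suc i) * (2 ^ b - 1) ^ (N - Suc i))"
      using Suc.IH by simp
    also have "\<dots> = (Suc N choose j) * (2 ^ b - 1) ^ (Suc N - j)"
    proof (cases "i < N")
      case True
      have "(2 ^ b - 1) * (2 ^ b - 1) ^ (N - Suc i) = ((2::nat) ^ b - 1) ^ (N - i)"
        using True by (metis Suc_diff_Suc power_Suc)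
      then show ?thesis unfolding Suc by (simp add: algebra_simps)
    next
      case False
      then show ?thesis unfolding Suc by simp
    qed
    finally show ?thesis .
  qed
qed


lemma nz_le: "y \<in> blocks b N \<Longrightarrow> nz b y \<le> N"
  unfolding nz_def blocks_def by (metis (mono_tags) length_filter_le mem_Collect_eq)

lemma card_Y:
  assumes b: "b \<ge> 1" and tN: "2 ^ b * t \<le> N"
  shows "(2::nat) ^ (b * N) < 2 * card {y \<in> blocks b N. t \<le> nz b y}"
proof -
  define c :: nat where "c = 2 ^ b - 1"
  have "(2::nat) ^ b \<ge> 2" using b by (metis power_increasing power_one_right zero_less_numeral one_le_numeral)
  then have c1: "c \<ge> 1" and c2: "c + 1 = 2 ^ b" unfolding c_def by auto
  define a :: "nat \<Rightarrow> real" where "a j = real ((N choose j) * c ^ (N - j))" for j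
  have pos: "a j > 0" if "j \<le> N" for j using that c1 unfolding a_def by simp
  have rec: "a (Suc j) * real (Suc j) * real c = a j * real (N - j)" if "j < N" for j
  proof -
    have e1: "Suc j * (N choose Suc j) = (N - j) * (N choose j)"
      using times_binomial_minus1_eq[of "Suc j" N] binomial_absorb_comp[of N j] by simp
    have e2: "c ^ (N - Suc j) * c = c ^ (N - j)" using that
      by (metis Suc_diff_Suc power_Suc2)
    have "(N choose Suc j) * c ^ (N - Suc j) * Suc j * c = (N choose j) * c ^ (N - j) * (N - j)"
      using e1 e2 by (metis (no_types, lifting) mult.assoc mult.commute)
    then have "real ((N choose Suc j) * c ^ (N - Suc j) * Suc j * c) = real ((N choose j) * c ^ (N - j) * (N - j))"
      by (simp only:)
    then show ?thesis unfolding a_def by (simp only: of_nat_mult)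
  qed
  have nm: "(real c + 1) * real t \<le> real N"
  proof -
    have "(c + 1) * t \<le> N" using tN c2 by simp
    then show ?thesis by (metis of_nat_1 of_nat_add of_nat_le_iff of_nat_mult)
  qed
  have ms: "sum a {..N} < 2 * sum a {t..N}"
    using median_sum[of "real c" N a t] c1 pos rec nm by simp
  have tot: "sum a {..N} = real ((2::nat) ^ (b * N))"
  proof -
    have "(\<Sum>j\<le>N. (N choose j) * c ^ (N - j)) = (1 + c) ^ N"
      using binomial[of 1 c N] by simp
    then have "sum a {..N} = real ((1 + c) ^ N)" unfolding a_def by (metis of_nat_sum)
    moreover have "1 + real c = 2 ^ b" using c2
      by (metis add.commute of_nat_1 of_nat_add of_nat_numeral of_nat_power)
    ultimately show ?thesis by (simp add: power_mult)
  qed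
  have Yeq: "{y \<in> blocks b N. t \<le> nz b y} = (\<Union>j\<in>{t..N}. BB b N j)"
    unfolding BB_def using nz_le by auto
  have "card {y \<in> blocks b N. t \<le> nz b y} = (\<Sum>j\<in>{t..N}. card (BB b N j))"
    unfolding Yeq using finite_blocks
    by (intro card_UN_disjoint) (auto simp: BB_def)
  also have "\<dots> = (\<Sum>j\<in>{t..N}. (N choose j) * c ^ (N - j))"
    unfolding card_BB c_def ..
  finally have "real (card {y \<in> blocks b N. t \<le> nz b y}) = sum a {t..N}"
    unfolding a_def by simp
  then show ?thesis using ms tot by linarith
qed


lemma card_fix:
  assumes J: "J \<subseteq> {..<N}"
  shows "card {x \<in> blocks b N. \<forall>i\<in>J. x ! i = \<alpha> i} \<le> (2 ^ b) ^ (N - card J)"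
proof -
  define A where "A = {x \<in> blocks b N. \<forall>i\<in>J. x ! i = \<alpha> i}"
  define S where "S = {..<N} - J"
  define f where "f x = restrict (\<lambda>i. x ! i) S" for x :: "bool list list"
  have inj: "inj_on f A"
  proof (rule inj_onI)
    fix x x' assume x: "x \<in> A" and x': "x' \<in> A" and e: "f x = f x'"
    have lx: "length x = N" "length x' = N" using x x' unfolding A_def blocks_def by auto
    show "x = x'"
    proof (rule nth_equalityI)
      show "length x = length x'" using lx by simp
      fix i assume "i < length x"
      then have i: "i < N" using lx by simp
      show "x ! i = x' ! i"
      proof (cases "i \<in> J")
        case True then show ?thesis using x x' unfolding A_def by auto
      next
        case False
        then have "i \<in> S" using i unfolding S_def by auto
        then show ?thesis using fun_cong[OF e, of i] unfolding f_def by simp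
      qed
    qed
  qed
  have sub: "f ` A \<subseteq> (\<Pi>\<^sub>E i\<in>S. {v. length v = b})"
  proof
    fix g assume "g \<in> f ` A"
    then obtain x where x: "x \<in> A" and g: "g = f x" by auto
    have "length x = N" "\<forall>v\<in>set x. length v = b" using x unfolding A_def blocks_def by auto
    then show "g \<in> (\<Pi>\<^sub>E i\<in>S. {v. length v = b})"
      unfolding g f_def S_def by (auto simp: PiE_def)
  qed
  have finS: "finite S" unfolding S_def by simp
  have fin: "finite (\<Pi>\<^sub>E i\<in>S. {v::bool list. length v = b})"
    using finS finite_V by (intro finite_PiE) auto
  have "card A \<le> card (\<Pi>\<^sub>E i\<in>S. {v::bool list. length v = b})"
    using card_inj_on_le[OF inj sub fin] .
  also have "\<dots> = (2 ^ b) ^ card S" using card_PiE[OF finS, of "\<lambda>_. {v::bool list. length v = b}"] by (simp add: card_V)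
  also have "card S = N - card J" unfolding S_def using J by (simp add: card_Diff_subset finite_subset)
  finally show ?thesis unfolding A_def .
qed

lemma IP_zb: "IP b x (zb b) = 0"
  unfolding IP_def zb_def by (simp add: sum.neutral)


theorem theorem4:
  fixes N b :: nat and \<Delta> K :: real
  assumes "N \<ge> 1" and "b \<ge> 1" and "\<Delta> \<ge> 1" and "K \<ge> 1"
    and "real b \<le> log 2 (real N / (K * \<Delta>))"
  shows "\<exists>Y. Y \<subseteq> blocks b N \<and> Y \<noteq> {}
    \<and> entropy_deficiency b N Y \<le> \<Delta>
    \<and> min_entropy_rate b N Y > 1 - 1 / real b
    \<and> (\<forall>I \<subseteq> {..<N}. real (card I) \<le> (K - 1) * \<Delta> \<longrightarrow>
          restrict (\<lambda>_. 1) ({..<N} - I) \<notin> IP_set b ({..<N} - I) (blocks b N) Y)"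
proof -
  note N1 = assms(1) and b1 = assms(2) and D1 = assms(3) and K1 = assms(4) and hlog = assms(5)
  define t :: nat where "t = nat \<lfloor>(K - 1) * \<Delta>\<rfloor> + 1"
  define Y where "Y = {y \<in> blocks b N. t \<le> nz b y}"
  have KD0: "(K - 1) * \<Delta> \<ge> 0" using K1 D1 by simp
  have tle: "real t \<le> (K - 1) * \<Delta> + 1" unfolding t_def using KD0 by linarith
  have tgt: "real t > (K - 1) * \<Delta>" unfolding t_def using KD0 by linarith
  have tKD: "real t \<le> K * \<Delta>" using tle D1 by (simp add: algebra_simps)
  have KDpos: "K * \<Delta> > 0" using K1 D1 by simp
  have "2 powr real b \<le> real N / (K * \<Delta>)"
    using hlog le_log_iff[of 2 "real N / (K * \<Delta>)" "real b"] KDpos N1 by simp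
  then have "2 ^ b \<le> real N / (K * \<Delta>)" by (simp add: powr_realpow)
  then have "2 ^ b * (K * \<Delta>) \<le> real N" using KDpos by (simp add: pos_le_divide_eq)
  moreover have "2 ^ b * real t \<le> 2 ^ b * (K * \<Delta>)" using tKD by (intro mult_left_mono) auto
  ultimately have "2 ^ b * real t \<le> real N" by linarith
  then have "real (2 ^ b * t) \<le> real N" by simp
  then have tN: "2 ^ b * t \<le> N" by linarith
  have cY: "(2::nat) ^ (b * N) < 2 * card Y" unfolding Y_def by (rule card_Y[OF b1 tN])
  have Ysub: "Y \<subseteq> blocks b N" unfolding Y_def by auto
  have finY: "finite Y" using finite_blocks[of b N] Ysub by (rule finite_subset[rotated])
  have Yne: "Y \<noteq> {}" using cY by auto
  define NY where "NY = real (card Y)"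
  have NYpos: "NY > 0" unfolding NY_def using finY Yne by (simp add: card_gt_0_iff)
  have NYle: "NY \<le> 2 ^ (b * N)"
  proof -
    have "card Y \<le> card (blocks b N)" using Ysub finite_blocks by (rule card_mono[rotated])
    then have "real (card Y) \<le> real ((2 ^ b) ^ N)" unfolding card_blocks by (simp only: of_nat_le_iff)
    then show ?thesis unfolding NY_def by (simp add: power_mult)
  qed
  define L where "L = log 2 NY"
  define d where "d = real b * real N - L"
  have ed: "entropy_deficiency b N Y = d" unfolding entropy_deficiency_def d_def L_def NY_def ..
  have d1: "d < 1"
  proof -
    have "2 powr (real b * real N - 1) = 2 ^ (b * N) / 2"
      by (simp add: powr_diff powr_realpow[symmetric])
    also have "\<dots> < NY"
    proof -
      have "real ((2::nat) ^ (b * N)) < real (2 * card Y)" using cY by (simp only: of_nat_less_iff)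
      then show ?thesis unfolding NY_def by simp
    qed
    finally have "real b * real N - 1 < L" unfolding L_def using less_log_iff[of 2 NY] NYpos by simp
    then show ?thesis unfolding d_def by simp
  qed
  have d0: "d \<ge> 0"
  proof -
    have "\<not> real b * real N < L"
    proof
      assume "real b * real N < L"
      then have "2 powr (real b * real N) < NY" unfolding L_def using less_log_iff[of 2 NY] NYpos by simp
      moreover have "2 powr (real b * real N) = 2 ^ (b * N)"
        by (simp add: powr_realpow[symmetric])
      ultimately show False using NYle by simp
    qed
    then show ?thesis unfolding d_def by simp
  qed
  define T where "T = {\<tau>. \<forall>J \<subseteq> {..<N}. \<forall>\<alpha> :: nat \<Rightarrow> bool list.
      prob_agree Y J \<alpha> \<le> (2 ^ b) powr (- \<tau> * real (card J))}"
  define \<tau>0 where "\<tau>0 = 1 - d / real b"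
  have pw: "(2 ^ b) powr x = 2 powr (real b * x)" for x :: real
    by (simp add: powr_powr powr_realpow[symmetric])
  have inT: "\<tau>0 \<in> T"
    unfolding T_def
  proof (intro CollectI allI impI)
    fix J \<alpha> assume J: "J \<subseteq> {..<N}"
    show "prob_agree Y J \<alpha> \<le> (2 ^ b) powr (- \<tau>0 * real (card J))"
    proof (cases "J = {}")
      case True
      then show ?thesis unfolding prob_agree_def using NYpos unfolding NY_def by simp
    next
      case False
      have finJ: "finite J" using J finite_subset by auto
      then have cJ: "card J \<ge> 1" using False by (simp add: Suc_le_eq card_gt_0_iff)
      have cJN: "card J \<le> N" using J by (metis card_lessThan card_mono finite_lessThan)
      have "card {x \<in> Y. \<forall>i\<in>J. x ! i = \<alpha> i} \<le> card {x \<in> blocks b N. \<forall>i\<in>J. x ! i = \<alpha> i}"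
        using Ysub finite_blocks by (intro card_mono) auto
      also have "\<dots> \<le> (2 ^ b) ^ (N - card J)" by (rule card_fix[OF J])
      finally have c0: "real (card {x \<in> Y. \<forall>i\<in>J. x ! i = \<alpha> i}) \<le> real (((2::nat) ^ b) ^ (N - card J))"
        by (simp only: of_nat_le_iff)
      have "real (((2::nat) ^ b) ^ (N - card J)) = (2::real) ^ (b * (N - card J))" by (simp add: power_mult)
      also have "\<dots> = 2 powr real (b * (N - card J))" by (rule powr_realpow[symmetric]) simp
      also have "real (b * (N - card J)) = real b * (real N - real (card J))" using cJN by (simp add: of_nat_diff)
      finally have c1: "real (card {x \<in> Y. \<forall>i\<in>J. x ! i = \<alpha> i}) \<le> 2 powr (real b * (real N - real (card J)))"
        using c0 by simp
      have "prob_agree Y J \<alpha> \<le> 2 powr (real b * (real N - real (card J))) / NY"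
        unfolding prob_agree_def NY_def[symmetric] using c1 NYpos by (simp add: divide_right_mono)
      also have "\<dots> = 2 powr (real b * (real N - real (card J)) - L)"
        unfolding L_def using NYpos by (simp add: powr_diff)
      also have "\<dots> \<le> 2 powr (real b * (- \<tau>0 * real (card J)))"
      proof (rule powr_mono)
        have "real b * (- \<tau>0 * real (card J)) = - real b * real (card J) + d * real (card J)"
          unfolding \<tau>0_def using b1 by (simp add: field_simps)
        moreover have "d * 1 \<le> d * real (card J)" using d0 cJ by (intro mult_left_mono) auto
        ultimately show "real b * (real N - real (card J)) - L \<le> real b * (- \<tau>0 * real (card J))"
          unfolding d_def by (simp add: algebra_simps)
      qed simp
      also have "\<dots> = (2 ^ b) powr (- \<tau>0 * real (card J))" by (rule pw[symmetric])
      finally show ?thesis .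
    qed
  qed
  have bdd: "bdd_above T"
  proof (rule bdd_aboveI)
    fix \<tau> assume "\<tau> \<in> T"
    obtain y0 where y0: "y0 \<in> Y" using Yne by auto
    have sub0: "{0} \<subseteq> {..<N}" using N1 by auto
    have all: "\<forall>J \<subseteq> {..<N}. \<forall>\<alpha> :: nat \<Rightarrow> bool list.
      prob_agree Y J \<alpha> \<le> (2 ^ b) powr (- \<tau> * real (card J))"
      using \<open>\<tau> \<in> T\<close> unfolding T_def by (rule CollectD)
    have "prob_agree Y {0} (\<lambda>_. y0 ! 0) \<le> (2 ^ b) powr (- \<tau> * real (card {0::nat}))"
      by (rule all[rule_format, OF sub0])
    then have h: "prob_agree Y {0} (\<lambda>_. y0 ! 0) \<le> (2 ^ b) powr (- \<tau>)" by simp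
    have "y0 \<in> {x \<in> Y. \<forall>i\<in>{0}. x ! i = y0 ! 0}" using y0 by simp
    moreover have "finite {x \<in> Y. \<forall>i\<in>{0}. x ! i = y0 ! 0}" using finY by simp
    ultimately have "card {x \<in> Y. \<forall>i\<in>{0}. x ! i = y0 ! 0} > 0"
      by (auto simp only: card_gt_0_iff)
    then have "card {x \<in> Y. \<forall>i\<in>{0}. x ! i = y0 ! 0} \<ge> 1" by simp
    then have "1 / NY \<le> prob_agree Y {0} (\<lambda>_. y0 ! 0)"
      unfolding prob_agree_def NY_def[symmetric] using NYpos by (simp add: divide_right_mono)
    then have "1 / NY \<le> 2 powr (real b * (- \<tau>))" using h unfolding pw by (rule order_trans)
    then have "1 / NY \<le> 2 powr (- real b * \<tau>)" by simp
    show "\<tau> \<le> L / real b"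
    proof (rule ccontr)
      assume "\<not> \<tau> \<le> L / real b"
      then have "L < real b * \<tau>" using b1 by (simp add: field_simps)
      then have "2 powr (- real b * \<tau>) < 2 powr (- L)" by simp
      also have "\<dots> = 1 / NY" unfolding L_def using NYpos by (simp add: powr_minus divide_inverse)
      finally show False using \<open>1 / NY \<le> 2 powr (- real b * \<tau>)\<close> by simp
    qed
  qed
  have mer: "min_entropy_rate b N Y \<ge> \<tau>0"
    unfolding min_entropy_rate_def T_def[symmetric] using cSup_upper[OF inT bdd] .
  have "\<tau>0 > 1 - 1 / real b" unfolding \<tau>0_def using d1 b1 by (simp add: divide_strict_right_mono)
  then have mer2: "min_entropy_rate b N Y > 1 - 1 / real b" using mer by simp
  have ipc: "restrict (\<lambda>_. 1) ({..<N} - I) \<notin> IP_set b ({..<N} - I) (blocks b N) Y"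
    if I: "I \<subseteq> {..<N}" and cI: "real (card I) \<le> (K - 1) * \<Delta>" for I
  proof
    assume "restrict (\<lambda>_. 1) ({..<N} - I) \<in> IP_set b ({..<N} - I) (blocks b N) Y"
    then obtain x y where y: "y \<in> Y"
      and e: "restrict (\<lambda>_. 1) ({..<N} - I) = restrict (\<lambda>i. IP b (x ! i) (y ! i)) ({..<N} - I)"
      unfolding IP_set_def by auto
    define Z where "Z = {i. i < length y \<and> y ! i = zb b}"
    have ly: "length y = N" using y unfolding Y_def blocks_def by auto
    have cZ: "card Z \<ge> t" using y unfolding Y_def nz_def Z_def by (simp add: length_filter_conv_card)
    have "card I < t" using cI tgt by linarith
    then have "\<not> Z \<subseteq> I" using cZ I card_mono[of I Z] finite_subset by fastforce
    then obtain i where iZ: "i \<in> Z" and iI: "i \<notin> I" by auto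
    have "i \<in> {..<N} - I" using iZ iI ly unfolding Z_def by auto
    then have "1 = IP b (x ! i) (y ! i)" using fun_cong[OF e, of i] by simp
    also have "\<dots> = 0" using iZ unfolding Z_def by (simp add: IP_zb)
    finally show False by simp
  qed
  show ?thesis
    using Ysub Yne ed d1 D1 mer2 ipc by (intro exI[of _ Y]) auto
qed

end
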